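(* Let $\mathcal{I}$ be any instance of vertex cover on $n$ vertices. Consider a partial branch-and-bound tree $\mathcal{TP}_S$ generated by strong-branching with the product score function and the worst-bound node selection rule with ties broken by selecting a node of largest depth. Let $N$ be a node of this tree that is not pruned, let $j\in I(\mathcal{I},N)$, and suppose that strong-branching decides to branch on $x_j$ at $N$. Then (1) $\mathcal{TP}_S^B(\mathcal{I})=\mathrm{OPT}(\mathcal{I})$; and (2) after branching on $x_j$, only $\mathcal{O}(n)$ further branchings are needed to find an integral optimal solution of $\mathcal{I}$.
   Context: Vertex cover IP for a graph $G=(V,E)$, $n=|V|$: minimize $\sum_{v} x_v$ subject to $x_u+x_v\ge 1$ ($uv\in E$), $x\in\{0,1\}^V$; LP relaxation uses $x\in[0,1]^V$; $\mathrm{OPT}(\mathcal{I})$ is the IP optimal value. Branch-and-bound: each node $N$ is the LP relaxation plus constraints $x_j=0$ or $x_j=1$ for variables fixed on the path from the root; branching on $x_j$ at $N$ creates children with $x_j=0$ and $x_j=1$ added. The LP solver returns some optimal solution of each node LP. A node is pruned if its LP is infeasible, or the returned solution is integral, or its LP value is strictly larger than the value of an integral solution already found. Worst-bound node selection: process an open node of smallest LP value. Strong branching with product score: at node $N$ with LP value $z$ and returned solution $\hat x$, for each $j$ with $\hat x_j$ fractional let $z^0_j,z^1_j$ be the optimal LP values of the children ($+\infty$ if infeasible), $\Delta^-_j=z^0_j-z$, $\Delta^+_j=z^1_j-z$, $\mathrm{score}_P(j)=\Delta^+_j\Delta^-_j$ with $0\cdot\infty=0$; branch on a maximizer. $I(\mathcal{I},N)$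 (the maximal set of integer variables at $N$) is the union, over all optimal solutions $x$ of the LP at node $N$, of the sets $\{j: x_j\in\{0,1\}\}$. A partial tree is a tree produced by this procedure before termination; its dual bound $\mathcal{TP}_S^B(\mathcal{I})$ is the minimum LP value over its unpruned (open) leaves. *)

theory Defs
  imports Complex_Main "HOL-Library.Extended_Real"
begin

text \<open>A node of the branch-and-bound tree is identified with
  the partial assignment of fixed variables on its root path
  (Some True: x_j = 1, Some False: x_j = 0).\<close>

type_synonym fixing = "nat \<rightharpoonup> bool"

definition is_vc_graph :: "nat set \<Rightarrow> nat set set \<Rightarrow> bool" where
  "is_vc_graph V E \<longleftrightarrow> finite V \<and> (\<forall>e\<in>E. \<exists>u v. u \<noteq> v \<and> u \<in> V \<and> v \<in> V \<and> e = {u, v})"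

definition obj :: "nat set \<Rightarrow> (nat \<Rightarrow> real) \<Rightarrow> real" where
  "obj V x = (\<Sum>v\<in>V. x v)"

definition lp_feas :: "nat set \<Rightarrow> nat set set \<Rightarrow> fixing \<Rightarrow> (nat \<Rightarrow> real) \<Rightarrow> bool" where
  "lp_feas V E F x \<longleftrightarrow>
     (\<forall>v\<in>V. 0 \<le> x v \<and> x v \<le> 1) \<and> (\<forall>v. v \<notin> V \<longrightarrow> x v = 0) \<and>
     (\<forall>u v. {u, v} \<in> E \<longrightarrow> 1 \<le> x u + x v) \<and>
     (\<forall>j b. F j = Some b \<longrightarrow> x j = (if b then 1 else 0))"

text \<open>Optimal LP value at a node; \<infinity> if infeasible.\<close>
definition lpval :: "nat set \<Rightarrow> nat set set \<Rightarrow> fixing \<Rightarrow> ereal" where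
  "lpval V E F = (INF x \<in> {x. lp_feas V E F x}. ereal (obj V x))"

definition lp_opt :: "nat set \<Rightarrow> nat set set \<Rightarrow> fixing \<Rightarrow> (nat \<Rightarrow> real) \<Rightarrow> bool" where
  "lp_opt V E F x \<longleftrightarrow> lp_feas V E F x \<and> ereal (obj V x) = lpval V E F"

definition integral_on :: "nat set \<Rightarrow> (nat \<Rightarrow> real) \<Rightarrow> bool" where
  "integral_on V x \<longleftrightarrow> (\<forall>v\<in>V. x v = 0 \<or> x v = 1)"

definition ip_feas :: "nat set \<Rightarrow> nat set set \<Rightarrow> (nat \<Rightarrow> real) \<Rightarrow> bool" where
  "ip_feas V E x \<longleftrightarrow> lp_feas V E Map.empty x \<and> integral_on V x"

definition OPT :: "nat set \<Rightarrow> nat set set \<Rightarrow> ereal" where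
  "OPT V E = (INF x \<in> {x. ip_feas V E x}. ereal (obj V x))"

definition int_vars :: "nat set \<Rightarrow> nat set set \<Rightarrow> fixing \<Rightarrow> nat set" where
  "int_vars V E F = (\<Union>x \<in> {x. lp_opt V E F x}. {j \<in> V. x j = 0 \<or> x j = 1})"

definition depth :: "fixing \<Rightarrow> nat" where
  "depth F = card (dom F)"

definition frac_vars :: "nat set \<Rightarrow> (nat \<Rightarrow> real) \<Rightarrow> nat set" where
  "frac_vars V x = {j \<in> V. x j \<noteq> 0 \<and> x j \<noteq> 1}"

text \<open>Product score of strong branching, with the convention 0 * \<infinity> = 0.\<close>
definition score_P :: "nat set \<Rightarrow> nat set set \<Rightarrow> fixing \<Rightarrow> nat \<Rightarrow> ereal" where
  "score_P V E F j =
     (let z = lpval V E F;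
          dm = lpval V E (F(j \<mapsto> False)) - z;
          dp = lpval V E (F(j \<mapsto> True)) - z
      in if dp = 0 \<or> dm = 0 then 0 else dp * dm)"

definition sb_choice :: "nat set \<Rightarrow> nat set set \<Rightarrow> fixing \<Rightarrow> (nat \<Rightarrow> real) \<Rightarrow> nat \<Rightarrow> bool" where
  "sb_choice V E F x j \<longleftrightarrow> j \<in> frac_vars V x \<and>
     (\<forall>k \<in> frac_vars V x. score_P V E F k \<le> score_P V E F j)"

definition wb_select :: "nat set \<Rightarrow> nat set set \<Rightarrow> fixing set \<Rightarrow> fixing \<Rightarrow> bool" where
  "wb_select V E Os N \<longleftrightarrow> N \<in> Os \<and> (\<forall>M\<in>Os. lpval V E N \<le> lpval V E M) \<and>
     (\<forall>M\<in>Os. lpval V E M = lpval V E N \<longrightarrow> depth M \<le> depth N)"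

text \<open>State of the procedure: open (unpruned, unbranched) leaves, and integral solutions found.\<close>
record bb_state =
  opn :: "fixing set"
  fnd :: "(nat \<Rightarrow> real) set"

definition incumbent :: "nat set \<Rightarrow> (nat \<Rightarrow> real) set \<Rightarrow> ereal" where
  "incumbent V S = (INF x \<in> S. ereal (obj V x))"

definition bb_init :: bb_state where
  "bb_init = \<lparr>opn = {Map.empty}, fnd = {}\<rparr>"

definition bb_branch :: "nat set \<Rightarrow> nat set set \<Rightarrow> bb_state \<Rightarrow> fixing \<Rightarrow> (nat \<Rightarrow> real) \<Rightarrow> nat \<Rightarrow> bb_state \<Rightarrow> bool" where
  "bb_branch V E s N x j s' \<longleftrightarrow>
     wb_select V E (opn s) N \<and> lpval V E N \<le> incumbent V (fnd s) \<and>
     lp_opt V E N x \<and> \<not> integral_on V x \<and> sb_choice V E N x j \<and>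
     s' = \<lparr>opn = (opn s - {N}) \<union>
                  {C \<in> {N(j \<mapsto> False), N(j \<mapsto> True)}.
                     lpval V E C < \<infinity> \<and> lpval V E C \<le> incumbent V (fnd s)},
           fnd = fnd s\<rparr>"

definition bb_integral :: "nat set \<Rightarrow> nat set set \<Rightarrow> bb_state \<Rightarrow> fixing \<Rightarrow> (nat \<Rightarrow> real) \<Rightarrow> bb_state \<Rightarrow> bool" where
  "bb_integral V E s N x s' \<longleftrightarrow>
     wb_select V E (opn s) N \<and> lpval V E N \<le> incumbent V (fnd s) \<and>
     lp_opt V E N x \<and> integral_on V x \<and>
     s' = \<lparr>opn = {M \<in> opn s - {N}. lpval V E M \<le> incumbent V (insert x (fnd s))},
           fnd = insert x (fnd s)\<rparr>"

definition bb_prune :: "nat set \<Rightarrow> nat set set \<Rightarrow> bb_state \<Rightarrow> fixing \<Rightarrow> bb_state \<Rightarrow> bool" where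
  "bb_prune V E s N s' \<longleftrightarrow>
     wb_select V E (opn s) N \<and> (lpval V E N = \<infinity> \<or> incumbent V (fnd s) < lpval V E N) \<and>
     s' = \<lparr>opn = opn s - {N}, fnd = fnd s\<rparr>"

text \<open>One step; the boolean records whether a branching was performed.\<close>
inductive bb_step :: "nat set \<Rightarrow> nat set set \<Rightarrow> bb_state \<Rightarrow> bool \<Rightarrow> bb_state \<Rightarrow> bool"
  for V E where
  "bb_branch V E s N x j s' \<Longrightarrow> bb_step V E s True s'"
| "bb_integral V E s N x s' \<Longrightarrow> bb_step V E s False s'"
| "bb_prune V E s N s' \<Longrightarrow> bb_step V E s False s'"

inductive bb_reach :: "nat set \<Rightarrow> nat set set \<Rightarrow> bb_state \<Rightarrow> bool" for V E where
  "bb_reach V E bb_init"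
| "bb_reach V E s \<Longrightarrow> bb_step V E s b s' \<Longrightarrow> bb_reach V E s'"

text \<open>bb_run V E s k t: t is reached from s by a sequence of steps containing k branchings.\<close>
inductive bb_run :: "nat set \<Rightarrow> nat set set \<Rightarrow> bb_state \<Rightarrow> nat \<Rightarrow> bb_state \<Rightarrow> bool" for V E where
  "bb_run V E s 0 s"
| "bb_step V E s b s1 \<Longrightarrow> bb_run V E s1 k t \<Longrightarrow> bb_run V E s (k + (if b then 1 else 0)) t"

definition dual_bound :: "nat set \<Rightarrow> nat set set \<Rightarrow> bb_state \<Rightarrow> ereal" where
  "dual_bound V E s = (INF N \<in> opn s. lpval V E N)"

end

theory Submission
  imports Defs "HOL-Library.FuncSet"
begin

lemma lpval_le: "lp_feas V E F x \<Longrightarrow> lpval V E F \<le> ereal (obj V x)"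
  unfolding lpval_def by (rule INF_lower) simp

lemma lpval_ge: "(\<And>x. lp_feas V E F x \<Longrightarrow> c \<le> ereal (obj V x)) \<Longrightarrow> c \<le> lpval V E F"
  unfolding lpval_def by (rule INF_greatest) simp

lemma lpval_infty: "lpval V E F = \<infinity> \<longleftrightarrow> (\<forall>x. \<not> lp_feas V E F x)"
proof
  assume "lpval V E F = \<infinity>"
  then show "\<forall>x. \<not> lp_feas V E F x" using lpval_le by fastforce
next
  assume "\<forall>x. \<not> lp_feas V E F x"
  then have e: "Collect (lp_feas V E F) = {}" by auto
  show "lpval V E F = \<infinity>" unfolding lpval_def e by (simp add: top_ereal_def)
qed

definition rv :: "real \<Rightarrow> real" where
  "rv a = (if a < 1/2 then 0 else if a = 1/2 then 1/2 else 1)"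

definition sv :: "real \<Rightarrow> real \<Rightarrow> real" where
  "sv m a = (if a < 1/2 then a/(2*m) else if a = 1/2 then 1/2 else 1 - (1-a)/(2*m))"

definition special :: "real \<Rightarrow> bool" where
  "special a \<longleftrightarrow> a = 0 \<or> a = 1/2 \<or> a = 1"

lemma rv_edge: "1 \<le> a + b \<Longrightarrow> 1 \<le> rv a + rv b"
  unfolding rv_def by auto

lemma rv_special: "special a \<Longrightarrow> rv a = a"
  unfolding rv_def special_def by auto

lemma sv_comb: "0 < m \<Longrightarrow> m < 1/2 \<Longrightarrow> (1 - 2*m) * rv a + 2*m * sv m a = a"
  unfolding rv_def sv_def by (auto simp: field_simps)

lemma sv_range: "0 < m \<Longrightarrow> 0 \<le> a \<Longrightarrow> a \<le> 1 \<Longrightarrow> (special a \<or> min a (1-a) \<le> m) \<Longrightarrow>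
   0 \<le> sv m a \<and> sv m a \<le> 1 \<and> (a < 1/2 \<longrightarrow> sv m a \<le> 1/2) \<and> (a \<ge> 1/2 \<longrightarrow> sv m a \<ge> 1/2)"
  unfolding sv_def special_def by (auto simp: field_simps min_def split: if_splits)

lemma sv_edge: "0 < m \<Longrightarrow> 0 \<le> a \<Longrightarrow> a \<le> 1 \<Longrightarrow> (special a \<or> min a (1-a) \<le> m) \<Longrightarrow>
   0 \<le> b \<Longrightarrow> b \<le> 1 \<Longrightarrow> (special b \<or> min b (1-b) \<le> m) \<Longrightarrow> 1 \<le> a + b \<Longrightarrow> 1 \<le> sv m a + sv m b"
proof -
  assume m: "0 < m" and a: "0 \<le> a" "a \<le> 1" "(special a \<or> min a (1-a) \<le> m)"
    and b: "0 \<le> b" "b \<le> 1" "(special b \<or> min b (1-b) \<le> m)" and ab: "1 \<le> a + b"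
  note ra = sv_range[OF m a] and rb = sv_range[OF m b]
  show ?thesis
  proof (cases "a < 1/2")
    case True
    then have "b > 1/2" using ab by linarith
    have "sv m a + sv m b = 1 + (a + b - 1) / (2*m)" using True \<open>b > 1/2\<close> m
      unfolding sv_def by (auto simp: field_simps)
    also have "\<dots> \<ge> 1" using ab m by simp
    finally show ?thesis .
  next
    case False
    show ?thesis
    proof (cases "b < 1/2")
      case True
      then have "a > 1/2" using ab by linarith
      have "sv m a + sv m b = 1 + (a + b - 1) / (2*m)" using True \<open>a > 1/2\<close> m
        unfolding sv_def by (auto simp: field_simps)
      also have "\<dots> \<ge> 1" using ab m by simp
      finally show ?thesis .
    next
      case False
      then show ?thesis using ra rb \<open>\<not> a < 1/2\<close> by linarith
    qed
  qed
qed

definition ns :: "nat set \<Rightarrow> (nat \<Rightarrow> real) \<Rightarrow> nat set" where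
  "ns V w = {v\<in>V. \<not> special (w v)}"

lemma feas_bounds: "lp_feas V E F w \<Longrightarrow> 0 \<le> w u \<and> w u \<le> 1"
  unfolding lp_feas_def by (cases "u \<in> V") auto

lemma rnd_feas: assumes w: "lp_feas V E F w" shows "lp_feas V E F (rv \<circ> w)"
  unfolding lp_feas_def
proof (intro conjI allI ballI impI)
  fix v assume "v \<in> V"
  show "0 \<le> (rv \<circ> w) v" "(rv \<circ> w) v \<le> 1" unfolding rv_def by auto
next
  fix v assume "v \<notin> V" then have "w v = 0" using w unfolding lp_feas_def by auto
  then show "(rv \<circ> w) v = 0" unfolding rv_def by simp
next
  fix u v assume "{u, v} \<in> E"
  then have "1 \<le> w u + w v" using w unfolding lp_feas_def by auto
  then show "1 \<le> (rv \<circ> w) u + (rv \<circ> w) v" using rv_edge by simp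
next
  fix j b assume "F j = Some b"
  then have "w j = (if b then 1 else 0)" using w unfolding lp_feas_def by auto
  then show "(rv \<circ> w) j = (if b then 1 else 0)" unfolding rv_def by auto
qed

lemma obj_comb: "obj V (\<lambda>v. a * f v + b * g v) = a * obj V f + b * obj V g"
  unfolding obj_def by (simp add: sum.distrib sum_distrib_left)

lemma decomp:
  assumes fin: "finite V" and w: "lp_feas V E F w" and ne: "ns V w \<noteq> {}"
  shows "\<exists>m. 0 < m \<and> m < 1/2 \<and> lp_feas V E F (sv m \<circ> w) \<and>
      ns V (sv m \<circ> w) \<subset> ns V w \<and>
      obj V w = (1 - 2*m) * obj V (rv \<circ> w) + 2*m * obj V (sv m \<circ> w)"
proof -
  let ?f = "\<lambda>v. min (w v) (1 - w v)"
  define m where "m = Max (?f ` ns V w)"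
  have finns: "finite (ns V w)" using fin unfolding ns_def by simp
  have mle: "\<And>v. v \<in> ns V w \<Longrightarrow> ?f v \<le> m" unfolding m_def using finns by simp
  have "m \<in> ?f ` ns V w" unfolding m_def using finns ne by simp
  then obtain v0 where v0: "v0 \<in> ns V w" "m = ?f v0" by blast
  have bv0: "0 \<le> w v0" "w v0 \<le> 1" using feas_bounds[OF w] by auto
  have nsp: "w v0 \<noteq> 0" "w v0 \<noteq> 1/2" "w v0 \<noteq> 1" using v0(1) unfolding ns_def special_def by auto
  have m0: "0 < m" "m < 1/2" using v0(2) bv0 nsp by (auto simp: min_def)
  have sm: "\<And>u. special (w u) \<or> min (w u) (1 - w u) \<le> m"
  proof -
    fix u show "special (w u) \<or> min (w u) (1 - w u) \<le> m"
    proof (cases "u \<in> V")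
      case True then show ?thesis using mle unfolding ns_def by auto
    next
      case False then have "w u = 0" using w unfolding lp_feas_def by auto
      then show ?thesis unfolding special_def by simp
    qed
  qed
  have sv0: "sv m 0 = 0" "sv m 1 = 1" "sv m (1/2) = 1/2" unfolding sv_def by auto
  have feas: "lp_feas V E F (sv m \<circ> w)"
    unfolding lp_feas_def
  proof (intro conjI allI ballI impI)
    fix v assume "v \<in> V"
    show "0 \<le> (sv m \<circ> w) v" "(sv m \<circ> w) v \<le> 1"
      using sv_range[OF m0(1) _ _ sm[of v]] feas_bounds[OF w, of v] by auto
  next
    fix v assume "v \<notin> V" then have "w v = 0" using w unfolding lp_feas_def by auto
    then show "(sv m \<circ> w) v = 0" using sv0 by simp
  next
    fix u v assume "{u, v} \<in> E"
    then have "1 \<le> w u + w v" using w unfolding lp_feas_def by auto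
    then show "1 \<le> (sv m \<circ> w) u + (sv m \<circ> w) v"
      using sv_edge[OF m0(1) _ _ sm[of u] _ _ sm[of v]] feas_bounds[OF w, of u] feas_bounds[OF w, of v]
      by auto
  next
    fix j b assume "F j = Some b"
    then have "w j = (if b then 1 else 0)" using w unfolding lp_feas_def by auto
    then show "(sv m \<circ> w) j = (if b then 1 else 0)" using sv0 by auto
  qed
  have v0sp: "sv m (w v0) = 1/2"
    using v0(2) nsp m0 unfolding sv_def by (auto simp: min_def field_simps)
  have spp: "\<And>a. special a \<Longrightarrow> special (sv m a)" unfolding special_def sv_def by auto
  have sub: "ns V (sv m \<circ> w) \<subseteq> ns V w"
    unfolding ns_def using spp by auto
  have "v0 \<notin> ns V (sv m \<circ> w)" using v0sp unfolding ns_def special_def by simp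
  then have psub: "ns V (sv m \<circ> w) \<subset> ns V w" using sub v0(1) by blast
  have "obj V w = obj V (\<lambda>v. (1 - 2*m) * (rv \<circ> w) v + 2*m * (sv m \<circ> w) v)"
    using sv_comb[OF m0] by simp
  also have "\<dots> = (1 - 2*m) * obj V (rv \<circ> w) + 2*m * obj V (sv m \<circ> w)"
    by (rule obj_comb)
  finally show ?thesis using m0 feas psub by blast
qed

lemma exists_hi:
  assumes fin: "finite V"
  shows "lp_feas V E F w \<Longrightarrow> \<exists>h. lp_feas V E F h \<and> (\<forall>v\<in>V. special (h v)) \<and> obj V h \<le> obj V w"
proof (induction "card (ns V w)" arbitrary: w rule: less_induct)
  case less
  show ?case
  proof (cases "ns V w = {}")
    case True
    then show ?thesis using less.prems unfolding ns_def by auto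
  next
    case False
    from decomp[OF fin less.prems False] obtain m where m: "0 < m" "m < 1/2"
      "lp_feas V E F (sv m \<circ> w)" "ns V (sv m \<circ> w) \<subset> ns V w"
      "obj V w = (1 - 2*m) * obj V (rv \<circ> w) + 2*m * obj V (sv m \<circ> w)" by blast
    have rf: "lp_feas V E F (rv \<circ> w)" by (rule rnd_feas[OF less.prems])
    have rs: "\<forall>v\<in>V. special ((rv \<circ> w) v)" unfolding rv_def special_def by auto
    show ?thesis
    proof (cases "obj V (rv \<circ> w) \<le> obj V w")
      case True then show ?thesis using rf rs by blast
    next
      case False
      have "(1-2*m) * obj V w \<le> (1-2*m) * obj V (rv \<circ> w)"
        using False m(2) by (intro mult_left_mono) auto
      moreover have "(1-2*m) * obj V w = obj V w - 2*m * obj V w" by (simp add: algebra_simps)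
      ultimately have "2*m * obj V (sv m \<circ> w) \<le> 2*m * obj V w"
        using m(5) by linarith
      then have le: "obj V (sv m \<circ> w) \<le> obj V w" using m(1) by simp
      have "card (ns V (sv m \<circ> w)) < card (ns V w)"
        using m(4) fin unfolding ns_def by (intro psubset_card_mono) auto
      from less.hyps[OF this m(3)] le show ?thesis by force
    qed
  qed
qed

lemma fin_hi:
  assumes fin: "finite V"
  shows "finite {h. lp_feas V E F h \<and> (\<forall>v\<in>V. special (h v))}" (is "finite ?S")
proof -
  let ?T = "{h::nat\<Rightarrow>real. (\<forall>v\<in>V. h v \<in> {0,1/2,1}) \<and> (\<forall>v. v\<notin>V \<longrightarrow> h v = 0)}"
  have sub: "?S \<subseteq> ?T" unfolding lp_feas_def special_def by auto
  have inj: "inj_on (\<lambda>h. restrict h V) ?T"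
  proof (rule inj_onI)
    fix h h' assume hT: "h \<in> ?T" "h' \<in> ?T" and eq: "restrict h V = restrict h' V"
    show "h = h'"
    proof
      fix v show "h v = h' v"
      proof (cases "v \<in> V")
        case True then show ?thesis using fun_cong[OF eq, of v] by simp
      next
        case False then show ?thesis using hT by auto
      qed
    qed
  qed
  have "(\<lambda>h. restrict h V) ` ?T \<subseteq> PiE V (\<lambda>_. {0,1/2,1})" by auto
  moreover have "finite (PiE V (\<lambda>_. {0,1/2,1::real}))" using fin by (simp add: finite_PiE)
  ultimately have "finite ((\<lambda>h. restrict h V) ` ?T)" by (rule finite_subset)
  then have "finite ?T" using inj by (rule finite_imageD)
  then show ?thesis using sub by (rule finite_subset[rotated])
qed

lemma attain:
  assumes fin: "finite V" and ne: "lpval V E F \<noteq> \<infinity>"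
  shows "\<exists>h. lp_opt V E F h \<and> (\<forall>v\<in>V. special (h v))"
proof -
  let ?S = "{h. lp_feas V E F h \<and> (\<forall>v\<in>V. special (h v))}"
  obtain w where w: "lp_feas V E F w" using ne lpval_infty by blast
  obtain h0 where "h0 \<in> ?S" using exists_hi[OF fin w] by blast
  then have Sne: "?S \<noteq> {}" by blast
  define h where "h = arg_min_on (obj V) ?S"
  have hS: "h \<in> ?S" unfolding h_def by (rule arg_min_if_finite(1)[OF fin_hi[OF fin] Sne])
  have hmin: "\<And>g. g \<in> ?S \<Longrightarrow> obj V h \<le> obj V g"
    unfolding h_def by (rule arg_min_least[OF fin_hi[OF fin] Sne])
  have "ereal (obj V h) \<le> lpval V E F"
  proof (rule lpval_ge)
    fix x assume "lp_feas V E F x"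
    then obtain g where "g \<in> ?S" "obj V g \<le> obj V x" using exists_hi[OF fin] by blast
    then show "ereal (obj V h) \<le> ereal (obj V x)" using hmin by force
  qed
  moreover have "lpval V E F \<le> ereal (obj V h)" using hS lpval_le by blast
  ultimately show ?thesis using hS unfolding lp_opt_def by auto
qed

lemma comb_feas:
  assumes "lp_feas V E F z" "lp_feas V E F y" "0 \<le> t" "t \<le> 1"
  shows "lp_feas V E F (\<lambda>v. (1-t) * z v + t * y v)"
  using assms unfolding lp_feas_def
proof (intro conjI allI ballI impI)
  fix v assume "v \<in> V"
  then have "0 \<le> z v" "z v \<le> 1" "0 \<le> y v" "y v \<le> 1" using assms unfolding lp_feas_def by auto
  then show "0 \<le> (1-t) * z v + t * y v" "(1-t) * z v + t * y v \<le> 1" using assms(3,4)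
    using convex_bound_le[of "z v" 1 "y v" "1-t" t] by auto
next
  fix v assume "v \<notin> V" then show "(1-t) * z v + t * y v = 0" using assms unfolding lp_feas_def by auto
next
  fix u v assume "{u, v} \<in> E"
  then have "1 \<le> z u + z v" "1 \<le> y u + y v" using assms unfolding lp_feas_def by auto
  then have "(1-t) * 1 + t * 1 \<le> (1-t) * (z u + z v) + t * (y u + y v)"
    using assms(3,4) by (intro add_mono mult_left_mono) auto
  then show "1 \<le> (1-t) * z u + t * y u + ((1-t) * z v + t * y v)" by (simp add: algebra_simps)
next
  fix j b assume "F j = Some b"
  then show "(1-t) * z j + t * y j = (if b then 1 else 0)" using assms unfolding lp_feas_def
    by (auto simp: algebra_simps)
qed

lemma comb_opt:
  assumes "lp_opt V E F z" "lp_opt V E F y" "0 \<le> t" "t \<le> 1"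
  shows "lp_opt V E F (\<lambda>v. (1-t) * z v + t * y v)"
proof -
  have "obj V z = obj V y" using assms(1,2) unfolding lp_opt_def by (metis ereal.inject)
  moreover have "obj V (\<lambda>v. (1-t) * z v + t * y v) = (1-t) * obj V z + t * obj V y" by (rule obj_comb)
  ultimately have "obj V (\<lambda>v. (1-t) * z v + t * y v) = obj V z" by (simp add: algebra_simps)
  then show ?thesis using assms comb_feas unfolding lp_opt_def by auto
qed

lemma rnd_opt:
  assumes fin: "finite V" and w: "lp_opt V E F w"
  shows "lp_opt V E F (rv \<circ> w)"
proof (cases "ns V w = {}")
  case True
  have "rv \<circ> w = w"
  proof
    fix v show "(rv \<circ> w) v = w v"
    proof (cases "v \<in> V")
      case True then show ?thesis using \<open>ns V w = {}\<close> rv_special unfolding ns_def by auto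
    next
      case False then have "w v = 0" using w unfolding lp_opt_def lp_feas_def by auto
      then show ?thesis unfolding rv_def by simp
    qed
  qed
  then show ?thesis using w by simp
next
  case False
  have wf: "lp_feas V E F w" and wv: "ereal (obj V w) = lpval V E F" using w unfolding lp_opt_def by auto
  from decomp[OF fin wf False] obtain m where m: "0 < m" "m < 1/2"
      "lp_feas V E F (sv m \<circ> w)"
      "obj V w = (1 - 2*m) * obj V (rv \<circ> w) + 2*m * obj V (sv m \<circ> w)" by blast
  have rf: "lp_feas V E F (rv \<circ> w)" by (rule rnd_feas[OF wf])
  have "ereal (obj V w) \<le> ereal (obj V (sv m \<circ> w))" using wv lpval_le[OF m(3)] by simp
  then have "2*m * obj V w \<le> 2*m * obj V (sv m \<circ> w)" using m(1) by simp
  moreover have "(1-2*m) * obj V w = obj V w - 2*m * obj V w" by (simp add: algebra_simps)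
  ultimately have "(1-2*m) * obj V (rv \<circ> w) \<le> (1-2*m) * obj V w" using m(4) by linarith
  then have le: "obj V (rv \<circ> w) \<le> obj V w" using m(2) by simp
  have "ereal (obj V w) \<le> ereal (obj V (rv \<circ> w))" using wv lpval_le[OF rf] by simp
  then have "obj V (rv \<circ> w) = obj V w" using le by simp
  then show ?thesis using rf wv unfolding lp_opt_def by simp
qed

lemma K:
  assumes fin: "finite V" and x0: "lp_opt V E F x0"
    and hyp: "\<forall>u\<in>V. \<exists>y. lp_opt V E F y \<and> (y u = 0 \<or> y u = 1)"
  shows "\<exists>z. lp_opt V E F z \<and> integral_on V z"
proof -
  let ?P = "\<lambda>z. lp_opt V E F z \<and> (\<forall>v\<in>V. special (z v))"
  let ?H = "\<lambda>z. card {v\<in>V. z v = 1/2}"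
  have "?P (rv \<circ> x0)" using rnd_opt[OF fin x0] unfolding rv_def special_def by auto
  from ex_has_least_nat[of ?P, OF this, of ?H] obtain z where z: "?P z"
    and zmin: "\<And>z'. ?P z' \<Longrightarrow> ?H z \<le> ?H z'" by blast
  show ?thesis
  proof (cases "{v\<in>V. z v = 1/2} = {}")
    case True
    then have "integral_on V z" using z unfolding integral_on_def special_def by auto
    then show ?thesis using z by blast
  next
    case False
    then obtain v where v: "v \<in> V" "z v = 1/2" by blast
    obtain y where y: "lp_opt V E F y" "y v = 0 \<or> y v = 1" using hyp v(1) by blast
    let ?w = "\<lambda>u. (1 - 1/4) * z u + 1/4 * y u"
    have wopt: "lp_opt V E F ?w" by (rule comb_opt[OF conjunct1[OF z] y(1)]) simp_all
    let ?z' = "rv \<circ> ?w"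
    have z'P: "?P ?z'" using rnd_opt[OF fin wopt] unfolding rv_def special_def by auto
    have yb: "\<And>u. 0 \<le> y u \<and> y u \<le> 1" using y(1) feas_bounds unfolding lp_opt_def by blast
    have sub: "{u\<in>V. ?z' u = 1/2} \<subseteq> {u\<in>V. z u = 1/2} - {v}"
    proof
      fix u assume u: "u \<in> {u\<in>V. ?z' u = 1/2}"
      then have wu: "?w u = 1/2" unfolding rv_def by (auto split: if_splits)
      have "special (z u)" using z u by auto
      then have "z u = 1/2" using wu yb[of u] unfolding special_def by auto
      moreover have "u \<noteq> v" using wu y(2) v(2) by auto
      ultimately show "u \<in> {u\<in>V. z u = 1/2} - {v}" using u by auto
    qed
    have "?H ?z' < ?H z"
    proof -
      have "?H ?z' \<le> card ({u\<in>V. z u = 1/2} - {v})" using sub fin by (intro card_mono) auto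
      also have "\<dots> < ?H z" using v fin by (intro psubset_card_mono) auto
      finally show ?thesis .
    qed
    then show ?thesis using zmin[OF z'P] by simp
  qed
qed

lemma child_feas: "M j = None \<Longrightarrow>
  lp_feas V E (M(j\<mapsto>b)) y \<longleftrightarrow> lp_feas V E M y \<and> y j = (if b then 1 else 0)"
  unfolding lp_feas_def by (auto split: if_splits)

lemma child_ge: "M j = None \<Longrightarrow> lpval V E M \<le> lpval V E (M(j\<mapsto>b))"
  by (rule lpval_ge) (auto simp: child_feas intro: lpval_le)

lemma opt_frac_none: "lp_opt V E M x \<Longrightarrow> j \<in> frac_vars V x \<Longrightarrow> M j = None"
  unfolding lp_opt_def lp_feas_def frac_vars_def by (cases "M j") (auto split: if_splits)

lemma opt_val: "lp_opt V E M x \<Longrightarrow> lpval V E M = ereal (obj V x)"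
  unfolding lp_opt_def by simp

lemma score_cases:
  assumes r: "lpval V E M = ereal r"
    and c0: "ereal r \<le> lpval V E (M(u\<mapsto>False))" and c1: "ereal r \<le> lpval V E (M(u\<mapsto>True))"
  shows "((lpval V E (M(u\<mapsto>True)) = ereal r \<or> lpval V E (M(u\<mapsto>False)) = ereal r) \<and> score_P V E M u = 0)
     \<or> (ereal r < lpval V E (M(u\<mapsto>True)) \<and> ereal r < lpval V E (M(u\<mapsto>False)) \<and> 0 < score_P V E M u)"
  using c0 c1 unfolding score_P_def Let_def r
  by (cases "lpval V E (M(u\<mapsto>False))" rule: ereal_cases;
      cases "lpval V E (M(u\<mapsto>True))" rule: ereal_cases) auto

definition good :: "nat set \<Rightarrow> nat set set \<Rightarrow> fixing \<Rightarrow> bool" where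
  "good V E M \<longleftrightarrow> (\<exists>z. lp_opt V E M z \<and> integral_on V z)"

lemma frac_in_V: "j \<in> frac_vars V x \<Longrightarrow> j \<in> V" unfolding frac_vars_def by simp

lemma score_of_opt:
  assumes x: "lp_opt V E M x" and none: "M u = None"
  shows "((lpval V E (M(u\<mapsto>True)) = lpval V E M \<or> lpval V E (M(u\<mapsto>False)) = lpval V E M) \<and> score_P V E M u = 0)
     \<or> (lpval V E M < lpval V E (M(u\<mapsto>True)) \<and> lpval V E M < lpval V E (M(u\<mapsto>False)) \<and> 0 < score_P V E M u)"
  using score_cases[OF opt_val[OF x], of u] child_ge[of M u, OF none] opt_val[OF x] by metis

lemma child_opt:
  assumes fin: "finite V" and x: "lp_opt V E M x" and none: "M u = None"
    and eq: "lpval V E (M(u\<mapsto>b)) = lpval V E M"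
  shows "\<exists>y. lp_opt V E M y \<and> y u = (if b then 1 else 0)"
proof -
  have "lpval V E (M(u\<mapsto>b)) \<noteq> \<infinity>" using eq opt_val[OF x] by simp
  then obtain y where y: "lp_opt V E (M(u\<mapsto>b)) y" using attain[OF fin] by blast
  then have "lp_feas V E M y" "y u = (if b then 1 else 0)"
    using child_feas[of M u, OF none] unfolding lp_opt_def by auto
  moreover have "ereal (obj V y) = lpval V E M" using y eq unfolding lp_opt_def by simp
  ultimately show ?thesis unfolding lp_opt_def by blast
qed

lemma score_le0:
  assumes fin: "finite V" and x: "lp_opt V E M x" and le: "score_P V E M u \<le> 0"
  shows "\<exists>y. lp_opt V E M y \<and> (y u = 0 \<or> y u = 1)"
proof (cases "M u")
  case (Some b)
  then have "x u = (if b then 1 else 0)" using x unfolding lp_opt_def lp_feas_def by auto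
  then show ?thesis using x by (cases b) auto
next
  case None
  from score_of_opt[OF x None] le have
    "lpval V E (M(u\<mapsto>True)) = lpval V E M \<or> lpval V E (M(u\<mapsto>False)) = lpval V E M" by auto
  then show ?thesis
  proof
    assume "lpval V E (M(u\<mapsto>True)) = lpval V E M"
    from child_opt[OF fin x None this] show ?thesis by auto
  next
    assume "lpval V E (M(u\<mapsto>False)) = lpval V E M"
    from child_opt[OF fin x None this] show ?thesis by auto
  qed
qed

lemma good_child:
  assumes z: "lp_opt V E M z" "integral_on V z" and j: "j \<in> V" and none: "M j = None"
  shows "lp_opt V E (M(j\<mapsto>(z j = 1))) z \<and> lpval V E (M(j\<mapsto>(z j = 1))) = lpval V E M"
proof -
  have zj: "z j = (if z j = 1 then 1 else 0)" using z(2) j unfolding integral_on_def by auto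
  have f: "lp_feas V E (M(j\<mapsto>(z j = 1))) z" using child_feas[of M j, OF none] z(1) zj unfolding lp_opt_def by auto
  have "lpval V E (M(j\<mapsto>(z j = 1))) \<le> lpval V E M" using lpval_le[OF f] opt_val[OF z(1)] by simp
  moreover have "lpval V E M \<le> lpval V E (M(j\<mapsto>(z j = 1)))" by (rule child_ge[of M j, OF none])
  ultimately have eq: "lpval V E (M(j\<mapsto>(z j = 1))) = lpval V E M" by simp
  then show ?thesis using f opt_val[OF z(1)] unfolding lp_opt_def by simp
qed

lemma good_of_intvars:
  assumes fin: "finite V" and x: "lp_opt V E N x" and sb: "sb_choice V E N x j"
    and iv: "j \<in> int_vars V E N"
  shows "good V E N"
proof -
  obtain y where y: "lp_opt V E N y" "j \<in> V" "y j = 0 \<or> y j = 1"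
    using iv unfolding int_vars_def by auto
  have jf: "j \<in> frac_vars V x" using sb unfolding sb_choice_def by simp
  have none: "N j = None" by (rule opt_frac_none[OF x jf])
  have yint: "y j = (if y j = 1 then 1 else 0)" using y(3) by auto
  have yf: "lp_feas V E (N(j\<mapsto>(y j = 1))) y"
    using child_feas[of N j, OF none] y(1) yint unfolding lp_opt_def by auto
  have "lpval V E (N(j\<mapsto>(y j = 1))) \<le> lpval V E N" using lpval_le[OF yf] opt_val[OF y(1)] by simp
  then have "\<not> (lpval V E N < lpval V E (N(j\<mapsto>(y j = 1))))" by simp
  then have s0: "score_P V E N j = 0" using score_of_opt[OF x none] by (cases "y j = 1") auto
  have "\<forall>u\<in>V. \<exists>y. lp_opt V E N y \<and> (y u = 0 \<or> y u = 1)"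
  proof
    fix u assume u: "u \<in> V"
    show "\<exists>y. lp_opt V E N y \<and> (y u = 0 \<or> y u = 1)"
    proof (cases "x u = 0 \<or> x u = 1")
      case True then show ?thesis using x by blast
    next
      case False
      then have "u \<in> frac_vars V x" using u unfolding frac_vars_def by auto
      then have "score_P V E N u \<le> 0" using sb s0 unfolding sb_choice_def by auto
      then show ?thesis by (rule score_le0[OF fin x])
    qed
  qed
  from K[OF fin x this] show ?thesis unfolding good_def .
qed

lemma bad_children:
  assumes fin: "finite V" and x: "lp_opt V E M x" and sb: "sb_choice V E M x j"
    and ng: "\<not> good V E M"
  shows "lpval V E M < lpval V E (M(j\<mapsto>b))"
proof -
  have "\<not> (\<forall>u\<in>V. \<exists>y. lp_opt V E M y \<and> (y u = 0 \<or> y u = 1))"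
    using K[OF fin x] ng unfolding good_def by blast
  then obtain u where u: "u \<in> V" "\<forall>y. lp_opt V E M y \<longrightarrow> \<not> (y u = 0 \<or> y u = 1)" by blast
  then have "u \<in> frac_vars V x" using x unfolding frac_vars_def by auto
  then have le: "score_P V E M u \<le> score_P V E M j" using sb unfolding sb_choice_def by auto
  have "\<not> score_P V E M u \<le> 0" using score_le0[OF fin x] u(2) by blast
  then have pos: "0 < score_P V E M j" using le by simp
  have jf: "j \<in> frac_vars V x" using sb unfolding sb_choice_def by simp
  have none: "M j = None" by (rule opt_frac_none[OF x jf])
  from score_of_opt[OF x none] pos show ?thesis by (cases b) auto
qed

lemma edge_in_V: "is_vc_graph V E \<Longrightarrow> {u, v} \<in> E \<Longrightarrow> u \<in> V \<and> v \<in> V"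
  unfolding is_vc_graph_def by (auto simp: doubleton_eq_iff)

lemma ones_ip: assumes g: "is_vc_graph V E" shows "ip_feas V E (\<lambda>v. if v \<in> V then 1 else 0)"
  unfolding ip_feas_def lp_feas_def integral_on_def using edge_in_V[OF g] by auto

lemma OPT_le: "ip_feas V E y \<Longrightarrow> OPT V E \<le> ereal (obj V y)"
  unfolding OPT_def by (rule INF_lower) simp

lemma opt_attain:
  assumes g: "is_vc_graph V E"
  shows "\<exists>y. ip_feas V E y \<and> ereal (obj V y) = OPT V E"
proof -
  have fin: "finite V" using g unfolding is_vc_graph_def by simp
  let ?S = "{y. ip_feas V E y}"
  have "?S \<subseteq> {h. lp_feas V E Map.empty h \<and> (\<forall>v\<in>V. special (h v))}"
    unfolding ip_feas_def integral_on_def special_def by auto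
  then have finS: "finite ?S" using fin_hi[OF fin] by (rule finite_subset)
  have Sne: "?S \<noteq> {}" using ones_ip[OF g] by blast
  define h where "h = arg_min_on (obj V) ?S"
  have hS: "h \<in> ?S" unfolding h_def by (rule arg_min_if_finite(1)[OF finS Sne])
  have hmin: "\<And>g. g \<in> ?S \<Longrightarrow> obj V h \<le> obj V g"
    unfolding h_def by (rule arg_min_least[OF finS Sne])
  have "ereal (obj V h) \<le> OPT V E" unfolding OPT_def
    by (rule INF_greatest) (use hmin in auto)
  moreover have "OPT V E \<le> ereal (obj V h)" using hS OPT_le by blast
  ultimately show ?thesis using hS by auto
qed

lemma ip_of_lp: "lp_feas V E M x \<Longrightarrow> integral_on V x \<Longrightarrow> ip_feas V E x"
  unfolding ip_feas_def lp_feas_def by auto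

lemma inc_ge: "(\<forall>y\<in>S. ip_feas V E y) \<Longrightarrow> OPT V E \<le> incumbent V S"
  unfolding incumbent_def by (rule INF_greatest) (auto intro: OPT_le)

lemma inc_le: "y \<in> S \<Longrightarrow> incumbent V S \<le> ereal (obj V y)"
  unfolding incumbent_def by (rule INF_lower)

definition found :: "nat set \<Rightarrow> nat set set \<Rightarrow> bb_state \<Rightarrow> bool" where
  "found V E t \<longleftrightarrow> (\<exists>y\<in>fnd t. ip_feas V E y \<and> ereal (obj V y) = OPT V E)"

definition Rinv :: "nat set \<Rightarrow> nat set set \<Rightarrow> bb_state \<Rightarrow> bool" where
  "Rinv V E s \<longleftrightarrow> (\<forall>y\<in>fnd s. ip_feas V E y) \<and> (\<forall>M\<in>opn s. dom M \<subseteq> V) \<and>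
     (found V E s \<or> (\<exists>M\<in>opn s. \<exists>y. ip_feas V E y \<and> ereal (obj V y) = OPT V E \<and> lp_feas V E M y))"

lemma step_fnd: "bb_step V E s b s1 \<Longrightarrow> fnd s \<subseteq> fnd s1"
  by (induction rule: bb_step.induct) (auto simp: bb_branch_def bb_integral_def bb_prune_def)

lemma found_step: "bb_step V E s b s1 \<Longrightarrow> found V E s \<Longrightarrow> found V E s1"
  using step_fnd unfolding found_def by blast

lemma found_run: "bb_run V E s k t \<Longrightarrow> found V E s \<Longrightarrow> found V E t"
  by (induction rule: bb_run.induct) (auto intro: found_step)

lemma OPT_fin: assumes g: "is_vc_graph V E" shows "OPT V E \<noteq> \<infinity>"
  using opt_attain[OF g] by auto

lemma reach_inv:
  assumes g: "is_vc_graph V E"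
  shows "bb_reach V E s \<Longrightarrow> Rinv V E s"
proof (induction rule: bb_reach.induct)
  case 1
  obtain y where "ip_feas V E y" "ereal (obj V y) = OPT V E" using opt_attain[OF g] by blast
  moreover then have "lp_feas V E Map.empty y" unfolding ip_feas_def by simp
  ultimately show ?case unfolding Rinv_def bb_init_def by auto
next
  case (2 s b s')
  have fip: "\<forall>y\<in>fnd s. ip_feas V E y" and dm: "\<forall>M\<in>opn s. dom M \<subseteq> V"
    and th: "found V E s \<or> (\<exists>M\<in>opn s. \<exists>y. ip_feas V E y \<and> ereal (obj V y) = OPT V E \<and> lp_feas V E M y)"
    using 2(3) unfolding Rinv_def by auto
  have incg: "OPT V E \<le> incumbent V (fnd s)" using inc_ge[OF fip] .
  from 2(2) show ?case
  proof (cases rule: bb_step.cases)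
    case (1 N x j)
    note br = 1[unfolded bb_branch_def]
    have xo: "lp_opt V E N x" and jf: "j \<in> frac_vars V x" using br unfolding sb_choice_def by auto
    have none: "N j = None" by (rule opt_frac_none[OF xo jf])
    have jV: "j \<in> V" using jf by (rule frac_in_V)
    have "N \<in> opn s" using br unfolding wb_select_def by simp
    have "dom N \<subseteq> V" using dm \<open>N \<in> opn s\<close> by blast
    then have cd: "\<And>b. dom (N(j\<mapsto>b)) \<subseteq> V" using jV by simp
    have dom': "\<forall>M\<in>opn s'. dom M \<subseteq> V"
    proof
      fix M assume "M \<in> opn s'"
      then have "M \<in> opn s \<or> M = N(j\<mapsto>False) \<or> M = N(j\<mapsto>True)" using br by auto
      then show "dom M \<subseteq> V" using cd dm by blast
    qed
    have fnd': "fnd s' = fnd s" using br by simp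
    have third: "found V E s' \<or> (\<exists>M\<in>opn s'. \<exists>y. ip_feas V E y \<and> ereal (obj V y) = OPT V E \<and> lp_feas V E M y)"
      using th
    proof
      assume "found V E s" then show ?thesis unfolding found_def fnd' by blast
    next
      assume "\<exists>M\<in>opn s. \<exists>y. ip_feas V E y \<and> ereal (obj V y) = OPT V E \<and> lp_feas V E M y"
      then obtain M y where M: "M \<in> opn s" "ip_feas V E y" "ereal (obj V y) = OPT V E" "lp_feas V E M y" by blast
      show ?thesis
      proof (cases "M = N")
        case False then show ?thesis using M br by auto
      next
        case True
        let ?C = "N(j\<mapsto>(y j = 1))"
        have yj: "y j = (if y j = 1 then 1 else 0)" using M(2) jV unfolding ip_feas_def integral_on_def by auto
        have yC: "lp_feas V E ?C y" using child_feas[of N j, OF none] M(4) True yj by auto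
        have le: "lpval V E ?C \<le> OPT V E" using lpval_le[OF yC] M(3) by simp
        have "lpval V E ?C \<noteq> \<infinity>"
        proof
          assume "lpval V E ?C = \<infinity>"
          then have "OPT V E = \<infinity>" using le by simp
          then show False using OPT_fin[OF g] by simp
        qed
        then have "lpval V E ?C < \<infinity>" by (simp add: less_top[symmetric])
        moreover have "lpval V E ?C \<le> incumbent V (fnd s)" using le incg by simp
        ultimately have "?C \<in> opn s'" using br by (cases "y j = 1") auto
        then show ?thesis using M yC by blast
      qed
    qed
    show ?thesis unfolding Rinv_def using fip fnd' dom' third by simp
  next
    case (2 N x)
    note bi = 2[unfolded bb_integral_def]
    have xo: "lp_opt V E N x" and xi: "integral_on V x" using bi by auto
    have xip: "ip_feas V E x" using xo xi ip_of_lp unfolding lp_opt_def by blast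
    have fip': "\<forall>y\<in>fnd s'. ip_feas V E y" using bi fip xip by auto
    have dom': "\<forall>M\<in>opn s'. dom M \<subseteq> V" using bi dm by auto
    have incg': "OPT V E \<le> incumbent V (insert x (fnd s))" using inc_ge fip xip by blast
    have third: "found V E s' \<or> (\<exists>M\<in>opn s'. \<exists>y. ip_feas V E y \<and> ereal (obj V y) = OPT V E \<and> lp_feas V E M y)"
      using th
    proof
      assume "found V E s" then show ?thesis using bi unfolding found_def by auto
    next
      assume "\<exists>M\<in>opn s. \<exists>y. ip_feas V E y \<and> ereal (obj V y) = OPT V E \<and> lp_feas V E M y"
      then obtain M y where M: "M \<in> opn s" "ip_feas V E y" "ereal (obj V y) = OPT V E" "lp_feas V E M y" by blast
      show ?thesis
      proof (cases "M = N")
        case True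
        have "ereal (obj V x) = lpval V E N" using xo unfolding lp_opt_def by simp
        also have "\<dots> \<le> OPT V E" using lpval_le[OF M(4)] M(3) True by simp
        finally have "ereal (obj V x) \<le> OPT V E" .
        moreover have "OPT V E \<le> ereal (obj V x)" by (rule OPT_le[OF xip])
        ultimately have "ereal (obj V x) = OPT V E" by simp
        then have "found V E s'" using bi xip unfolding found_def by auto
        then show ?thesis by simp
      next
        case False
        have "lpval V E M \<le> OPT V E" using lpval_le[OF M(4)] M(3) by simp
        then have "lpval V E M \<le> incumbent V (insert x (fnd s))" using incg' by simp
        then have "M \<in> opn s'" using bi M(1) False by auto
        then show ?thesis using M by blast
      qed
    qed
    show ?thesis unfolding Rinv_def using fip' dom' third by simp
  next
    case (3 N)
    note bp = 3[unfolded bb_prune_def]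
    have fip': "\<forall>y\<in>fnd s'. ip_feas V E y" using bp fip by auto
    have dom': "\<forall>M\<in>opn s'. dom M \<subseteq> V" using bp dm by auto
    have third: "found V E s' \<or> (\<exists>M\<in>opn s'. \<exists>y. ip_feas V E y \<and> ereal (obj V y) = OPT V E \<and> lp_feas V E M y)"
      using th
    proof
      assume "found V E s" then show ?thesis using bp unfolding found_def by auto
    next
      assume "\<exists>M\<in>opn s. \<exists>y. ip_feas V E y \<and> ereal (obj V y) = OPT V E \<and> lp_feas V E M y"
      then obtain M y where M: "M \<in> opn s" "ip_feas V E y" "ereal (obj V y) = OPT V E" "lp_feas V E M y" by blast
      have le: "lpval V E M \<le> OPT V E" using lpval_le[OF M(4)] M(3) by simp
      have "M \<noteq> N"
      proof
        assume "M = N"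
        then have "lpval V E N = \<infinity> \<or> incumbent V (fnd s) < lpval V E N" using bp by simp
        then show False
        proof
          assume "lpval V E N = \<infinity>"
          then have "OPT V E = \<infinity>" using le \<open>M = N\<close> by simp
          then show False using OPT_fin[OF g] by simp
        next
          assume "incumbent V (fnd s) < lpval V E N"
          then show False using le incg \<open>M = N\<close> by simp
        qed
      qed
      then have "M \<in> opn s'" using bp M(1) by auto
      then show ?thesis using M by blast
    qed
    show ?thesis unfolding Rinv_def using fip' dom' third by simp
  qed
qed

definition bad :: "nat set \<Rightarrow> nat set set \<Rightarrow> fixing \<Rightarrow> nat \<Rightarrow> bool" where
  "bad V E M d \<longleftrightarrow> lpval V E M = OPT V E \<and> depth M = d \<and> \<not> good V E M"

definition Jinv :: "nat set \<Rightarrow> nat set set \<Rightarrow> bb_state \<Rightarrow> nat \<Rightarrow> nat \<Rightarrow> bool" where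
  "Jinv V E t d m \<longleftrightarrow>
    (\<forall>M\<in>opn t. OPT V E \<le> lpval V E M \<and> dom M \<subseteq> V) \<and>
    (\<forall>M\<in>opn t. lpval V E M = OPT V E \<longrightarrow> depth M \<le> d) \<and>
    (\<exists>G\<in>opn t. good V E G \<and> lpval V E G = OPT V E \<and> depth G = d) \<and> m \<le> 1 \<and>
    (\<forall>M1\<in>opn t. \<forall>M2\<in>opn t. bad V E M1 d \<and> bad V E M2 d \<longrightarrow> M1 = M2) \<and>
    (m = 0 \<longrightarrow> (\<forall>M\<in>opn t. \<not> bad V E M d))"

lemma depth_child: "finite (dom M) \<Longrightarrow> M j = None \<Longrightarrow> depth (M(j\<mapsto>b)) = Suc (depth M)"
  unfolding depth_def by (simp add: card_insert_disjoint domIff)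

lemma branch_opn: "bb_branch V E t N x j t1 \<Longrightarrow>
   M \<in> opn t1 \<longleftrightarrow> (M \<in> opn t \<and> M \<noteq> N) \<or>
     ((M = N(j\<mapsto>False) \<or> M = N(j\<mapsto>True)) \<and> lpval V E M < \<infinity> \<and> lpval V E M \<le> incumbent V (fnd t))"
  unfolding bb_branch_def by auto

lemma branch_good:
  assumes g: "is_vc_graph V E"
    and A1: "\<forall>M\<in>opn t. OPT V E \<le> lpval V E M \<and> dom M \<subseteq> V"
    and A2: "\<forall>M\<in>opn t. lpval V E M = OPT V E \<longrightarrow> depth M \<le> d"
    and br: "bb_branch V E t N x j t1" and gN: "good V E N" and vN: "lpval V E N = OPT V E"
    and dN: "depth N = d" and inc: "OPT V E \<le> incumbent V (fnd t)"
  shows "Jinv V E t1 (Suc d) 1 \<and> Suc d \<le> card V"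
proof -
  have fin: "finite V" using g unfolding is_vc_graph_def by simp
  have Nin: "N \<in> opn t" using br unfolding bb_branch_def wb_select_def by simp
  have xo: "lp_opt V E N x" and jf: "j \<in> frac_vars V x" using br unfolding bb_branch_def sb_choice_def by auto
  have none: "N j = None" by (rule opt_frac_none[OF xo jf])
  have jV: "j \<in> V" using jf by (rule frac_in_V)
  have domN: "dom N \<subseteq> V" using A1 Nin by blast
  then have findom: "finite (dom N)" using fin finite_subset by blast
  have dch: "\<And>b. depth (N(j\<mapsto>b)) = Suc d" using depth_child[OF findom none] dN by simp
  have domch: "\<And>b. dom (N(j\<mapsto>b)) \<subseteq> V" using domN jV by simp
  have gech: "\<And>b. OPT V E \<le> lpval V E (N(j\<mapsto>b))" using child_ge[of N j, OF none] vN by metis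
  obtain z where z: "lp_opt V E N z" "integral_on V z" using gN unfolding good_def by blast
  define bz where "bz = (z j = 1)"
  have Cs: "lp_opt V E (N(j\<mapsto>bz)) z" "lpval V E (N(j\<mapsto>bz)) = OPT V E"
    using good_child[OF z jV none] vN unfolding bz_def by auto
  have gC: "good V E (N(j\<mapsto>bz))" using Cs z(2) unfolding good_def by blast
  have "lpval V E (N(j\<mapsto>bz)) < \<infinity>" using Cs(2) OPT_fin[OF g] by (simp add: less_top[symmetric])
  then have Cin: "N(j\<mapsto>bz) \<in> opn t1" using branch_opn[OF br] Cs(2) inc by (cases bz) auto
  have J1: "\<forall>M\<in>opn t1. OPT V E \<le> lpval V E M \<and> dom M \<subseteq> V"
    using A1 branch_opn[OF br] gech domch by blast
  have J2: "\<forall>M\<in>opn t1. lpval V E M = OPT V E \<longrightarrow> depth M \<le> Suc d"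
  proof (intro ballI impI)
    fix M assume "M \<in> opn t1" "lpval V E M = OPT V E"
    then show "depth M \<le> Suc d" using branch_opn[OF br, of M] A2 dch by (metis le_SucI order_refl)
  qed
  have J5: "\<forall>M1\<in>opn t1. \<forall>M2\<in>opn t1. bad V E M1 (Suc d) \<and> bad V E M2 (Suc d) \<longrightarrow> M1 = M2"
  proof (intro ballI impI)
    fix M1 M2 assume M: "M1 \<in> opn t1" "M2 \<in> opn t1" "bad V E M1 (Suc d) \<and> bad V E M2 (Suc d)"
    have ch: "\<And>M. M \<in> opn t1 \<Longrightarrow> bad V E M (Suc d) \<Longrightarrow> M = N(j\<mapsto>(\<not> bz))"
    proof -
      fix M assume "M \<in> opn t1" "bad V E M (Suc d)"
      then have "M \<noteq> N(j\<mapsto>bz)" and "depth M = Suc d" and "lpval V E M = OPT V E"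
        using gC unfolding bad_def by auto
      moreover have "M \<in> opn t \<longrightarrow> M \<noteq> N \<longrightarrow> depth M \<le> d" using A2 \<open>lpval V E M = OPT V E\<close> by auto
      ultimately show "M = N(j\<mapsto>(\<not> bz))" using branch_opn[OF br, of M] \<open>M \<in> opn t1\<close>
        by (cases bz) auto
    qed
    show "M1 = M2" using ch[OF M(1)] ch[OF M(2)] M(3) by simp
  qed
  have "Jinv V E t1 (Suc d) 1"
    unfolding Jinv_def using J1 J2 J5 Cin gC Cs(2) dch by auto
  moreover have "Suc d \<le> card V"
    using card_mono[OF fin domch[of bz]] dch[of bz] unfolding depth_def by simp
  ultimately show ?thesis by simp
qed

lemma sel_J:
  assumes J: "Jinv V E t d m" and ws: "wb_select V E (opn t) N"
  shows "N \<in> opn t \<and> lpval V E N = OPT V E \<and> depth N = d"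
proof -
  obtain G where G: "G \<in> opn t" "good V E G" "lpval V E G = OPT V E" "depth G = d" using J unfolding Jinv_def by blast
  have Nin: "N \<in> opn t" using ws unfolding wb_select_def by simp
  have "lpval V E N \<le> OPT V E" using ws G unfolding wb_select_def by metis
  moreover have "OPT V E \<le> lpval V E N" using J Nin unfolding Jinv_def by blast
  ultimately have v: "lpval V E N = OPT V E" by simp
  have "d \<le> depth N" using ws G v unfolding wb_select_def by metis
  moreover have "depth N \<le> d" using J Nin v unfolding Jinv_def by blast
  ultimately show ?thesis using Nin v by simp
qed

lemma step_J:
  assumes g: "is_vc_graph V E" and R: "Rinv V E t" and J: "Jinv V E t d m"
    and st: "bb_step V E t b t1"
  shows "found V E t1 \<or> (\<exists>d' m'. Jinv V E t1 d' m' \<and>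
     (if b then 1 else 0) + (2 * (card V - d') + m') \<le> 2 * (card V - d) + m)"
proof -
  have fin: "finite V" using g unfolding is_vc_graph_def by simp
  have inc: "OPT V E \<le> incumbent V (fnd t)" using R inc_ge unfolding Rinv_def by blast
  from st show ?thesis
  proof (cases rule: bb_step.cases)
    case (1 N x j)
    note br = 1(2)
    have ws: "wb_select V E (opn t) N" using br unfolding bb_branch_def by simp
    from sel_J[OF J ws] have Nin: "N \<in> opn t" and vN: "lpval V E N = OPT V E" and dN: "depth N = d" by auto
    have xo: "lp_opt V E N x" and sb: "sb_choice V E N x j" using br unfolding bb_branch_def by auto
    show ?thesis
    proof (cases "good V E N")
      case True
      have A1: "\<forall>M\<in>opn t. OPT V E \<le> lpval V E M \<and> dom M \<subseteq> V"
        and A2: "\<forall>M\<in>opn t. lpval V E M = OPT V E \<longrightarrow> depth M \<le> d" using J unfolding Jinv_def by auto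
      from branch_good[OF g A1 A2 br True vN dN inc] have
        "Jinv V E t1 (Suc d) 1" "Suc d \<le> card V" by auto
      then show ?thesis using 1(1) by (intro disjI2 exI[of _ "Suc d"] exI[of _ 1]) auto
    next
      case False
      have badN: "bad V E N d" using False vN dN unfolding bad_def by simp
      have m1: "m = 1" using J Nin badN unfolding Jinv_def by auto
      have gt: "\<And>b. OPT V E < lpval V E (N(j\<mapsto>b))" using bad_children[OF fin xo sb False] vN by metis
      have none: "N j = None" using opt_frac_none[OF xo] sb unfolding sb_choice_def by blast
      have jV: "j \<in> V" using sb frac_in_V unfolding sb_choice_def by blast
      have domN: "dom N \<subseteq> V" using J Nin unfolding Jinv_def by blast
      have domch: "\<And>b. dom (N(j\<mapsto>b)) \<subseteq> V" using domN jV by simp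
      have old: "\<And>M. M \<in> opn t1 \<Longrightarrow> lpval V E M = OPT V E \<Longrightarrow> M \<in> opn t \<and> M \<noteq> N"
        using branch_opn[OF br] gt by (metis less_irrefl)
      obtain G where G: "G \<in> opn t" "good V E G" "lpval V E G = OPT V E" "depth G = d"
        using J unfolding Jinv_def by blast
      have "G \<noteq> N" using G(2) False by auto
      then have Gin: "G \<in> opn t1" using branch_opn[OF br] G(1) by blast
      have J1: "\<forall>M\<in>opn t1. OPT V E \<le> lpval V E M \<and> dom M \<subseteq> V"
        using J branch_opn[OF br] gt domch unfolding Jinv_def by (metis less_imp_le)
      have J2: "\<forall>M\<in>opn t1. lpval V E M = OPT V E \<longrightarrow> depth M \<le> d"
        using J old unfolding Jinv_def by blast
      have J6: "\<forall>M\<in>opn t1. \<not> bad V E M d"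
      proof (intro ballI notI)
        fix M assume "M \<in> opn t1" "bad V E M d"
        then have "M \<in> opn t" "M \<noteq> N" using old unfolding bad_def by auto
        then show False using J Nin badN \<open>bad V E M d\<close> unfolding Jinv_def by blast
      qed
      have "Jinv V E t1 d 0" unfolding Jinv_def using J1 J2 J6 Gin G by auto
      then show ?thesis using 1(1) m1 by (intro disjI2 exI[of _ d] exI[of _ 0]) auto
    qed
  next
    case (2 N x)
    note bi = 2(2)[unfolded bb_integral_def]
    from sel_J[OF J] bi have vN: "lpval V E N = OPT V E" by auto
    have xo: "lp_opt V E N x" and xi: "integral_on V x" using bi by auto
    have xip: "ip_feas V E x" using xo xi ip_of_lp unfolding lp_opt_def by blast
    have "ereal (obj V x) = OPT V E" using xo vN unfolding lp_opt_def by simp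
    then show ?thesis using xip bi unfolding found_def by auto
  next
    case (3 N)
    note bp = 3(2)[unfolded bb_prune_def]
    from sel_J[OF J] bp have vN: "lpval V E N = OPT V E" by auto
    have False using bp vN inc OPT_fin[OF g] by auto
    then show ?thesis ..
  qed
qed

lemma run_J:
  assumes g: "is_vc_graph V E"
  shows "bb_run V E t k t' \<Longrightarrow> bb_reach V E t \<Longrightarrow> Jinv V E t d m \<Longrightarrow>
     found V E t' \<or> (\<exists>d' m'. Jinv V E t' d' m' \<and> k + (2 * (card V - d') + m') \<le> 2 * (card V - d) + m)"
proof (induction arbitrary: d m rule: bb_run.induct)
  case (1 s)
  then show ?case by auto
next
  case (2 s b s1 k t)
  have r1: "bb_reach V E s1" using 2(1,4) by (rule bb_reach.intros(2)[rotated])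
  from step_J[OF g reach_inv[OF g 2(4)] 2(5) 2(1)] show ?case
  proof
    assume "found V E s1" then show ?thesis using found_run[OF 2(2)] by simp
  next
    assume "\<exists>d' m'. Jinv V E s1 d' m' \<and> (if b then 1 else 0) + (2 * (card V - d') + m') \<le> 2 * (card V - d) + m"
    then obtain d1 m1 where d1: "Jinv V E s1 d1 m1"
      "(if b then 1 else 0) + (2 * (card V - d1) + m1) \<le> 2 * (card V - d) + m" by blast
    from 2(3)[OF r1 d1(1)] show ?thesis
    proof
      assume "found V E t" then show ?thesis by simp
    next
      assume "\<exists>d' m'. Jinv V E t d' m' \<and> k + (2 * (card V - d') + m') \<le> 2 * (card V - d1) + m1"
      then obtain d2 m2 where d2: "Jinv V E t d2 m2" "k + (2 * (card V - d2) + m2) \<le> 2 * (card V - d1) + m1"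
        by blast
      have "k + (if b then 1 else 0) + (2 * (card V - d2) + m2) \<le> 2 * (card V - d) + m"
        using d1(2) d2(2) by (cases b) simp_all
      then show ?thesis using d2(1) by blast
    qed
  qed
qed

theorem proposition2p2:
  shows "\<exists>c::real. \<forall>V E s N x j s'.
     is_vc_graph V E \<and> bb_reach V E s \<and> bb_branch V E s N x j s' \<and> j \<in> int_vars V E N \<longrightarrow>
       dual_bound V E s = OPT V E \<and>
       (\<forall>k t. bb_run V E s' k t \<and> (c * real (card V) < real k \<or> opn t = {}) \<longrightarrow>
          (\<exists>y\<in>fnd t. ip_feas V E y \<and> ereal (obj V y) = OPT V E))"
proof (intro exI[of _ 3] allI impI)
  fix V E s N x j s'
  assume H: "is_vc_graph V E \<and> bb_reach V E s \<and> bb_branch V E s N x j s' \<and> j \<in> int_vars V E N"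
  then have g: "is_vc_graph V E" and reach: "bb_reach V E s" and br: "bb_branch V E s N x j s'"
    and iv: "j \<in> int_vars V E N" by auto
  have fin: "finite V" using g unfolding is_vc_graph_def by simp
  have R: "Rinv V E s" by (rule reach_inv[OF g reach])
  have xo: "lp_opt V E N x" and sb: "sb_choice V E N x j" and ws: "wb_select V E (opn s) N"
    and lei: "lpval V E N \<le> incumbent V (fnd s)" using br unfolding bb_branch_def by auto
  have gN: "good V E N" by (rule good_of_intvars[OF fin xo sb iv])
  have Nin: "N \<in> opn s" using ws unfolding wb_select_def by simp
  have inc: "OPT V E \<le> incumbent V (fnd s)" using R inc_ge unfolding Rinv_def by blast
  have le1: "lpval V E N \<le> OPT V E"
  proof -
    have "found V E s \<or> (\<exists>M\<in>opn s. \<exists>y. ip_feas V E y \<and> ereal (obj V y) = OPT V E \<and> lp_feas V E M y)"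
      using R unfolding Rinv_def by blast
    then show ?thesis
    proof
      assume "found V E s"
      then obtain y where "y \<in> fnd s" "ereal (obj V y) = OPT V E" unfolding found_def by blast
      then have "incumbent V (fnd s) \<le> OPT V E" using inc_le by metis
      then show ?thesis using lei by simp
    next
      assume "\<exists>M\<in>opn s. \<exists>y. ip_feas V E y \<and> ereal (obj V y) = OPT V E \<and> lp_feas V E M y"
      then obtain M y where M: "M \<in> opn s" "ereal (obj V y) = OPT V E" "lp_feas V E M y" by blast
      have "lpval V E N \<le> lpval V E M" using ws M(1) unfolding wb_select_def by blast
      also have "\<dots> \<le> OPT V E" using lpval_le[OF M(3)] M(2) by simp
      finally show ?thesis .
    qed
  qed
  have le2: "OPT V E \<le> lpval V E N"
  proof -
    obtain z where z: "lp_opt V E N z" "integral_on V z" using gN unfolding good_def by blast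
    have "ip_feas V E z" using z ip_of_lp unfolding lp_opt_def by blast
    then show ?thesis using OPT_le opt_val[OF z(1)] by metis
  qed
  have vN: "lpval V E N = OPT V E" using le1 le2 by simp
  have db: "dual_bound V E s = lpval V E N"
  proof (rule antisym)
    show "dual_bound V E s \<le> lpval V E N" unfolding dual_bound_def by (rule INF_lower[OF Nin])
    show "lpval V E N \<le> dual_bound V E s" unfolding dual_bound_def
      by (rule INF_greatest) (use ws in \<open>auto simp: wb_select_def\<close>)
  qed
  have A1: "\<forall>M\<in>opn s. OPT V E \<le> lpval V E M \<and> dom M \<subseteq> V"
    using ws vN R unfolding wb_select_def Rinv_def by metis
  have A2: "\<forall>M\<in>opn s. lpval V E M = OPT V E \<longrightarrow> depth M \<le> depth N"
    using ws vN unfolding wb_select_def by metis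
  from branch_good[OF g A1 A2 br gN vN refl inc] have
    J: "Jinv V E s' (Suc (depth N)) 1" and dV: "Suc (depth N) \<le> card V" by auto
  have reach': "bb_reach V E s'" by (rule bb_reach.intros(2)[OF reach bb_step.intros(1)[OF br]])
  show "dual_bound V E s = OPT V E \<and>
       (\<forall>k t. bb_run V E s' k t \<and> (3 * real (card V) < real k \<or> opn t = {}) \<longrightarrow>
          (\<exists>y\<in>fnd t. ip_feas V E y \<and> ereal (obj V y) = OPT V E))"
  proof (intro conjI allI impI)
    show "dual_bound V E s = OPT V E" using db vN by simp
  next
    fix k t assume kt: "bb_run V E s' k t \<and> (3 * real (card V) < real k \<or> opn t = {})"
    from run_J[OF g conjunct1[OF kt] reach' J] show "\<exists>y\<in>fnd t. ip_feas V E y \<and> ereal (obj V y) = OPT V E"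
    proof
      assume "found V E t" then show ?thesis unfolding found_def .
    next
      assume "\<exists>d' m'. Jinv V E t d' m' \<and> k + (2 * (card V - d') + m') \<le> 2 * (card V - Suc (depth N)) + 1"
      then obtain d' m' where d': "Jinv V E t d' m'" "k + (2 * (card V - d') + m') \<le> 2 * (card V - Suc (depth N)) + 1"
        by blast
      have "opn t \<noteq> {}" using d'(1) unfolding Jinv_def by blast
      moreover have "k \<le> 3 * card V" using d'(2) dV by linarith
      then have "real k \<le> 3 * real (card V)" by linarith
      ultimately show ?thesis using kt by linarith
    qed
  qed
qed

end
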